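(* Let $\langle A,\to\rangle$ be a conditional algebra. For $a\in A$ let $Q_a$, $[Q_a]$ be defined as in the context, and for $U,V\subseteq\mathrm{Ul}(A)$ let $\Box_U(V)=U\to_{T_A}V$. Then: (1) for every $a\in A$, $[Q_a]=\Box_{\varphi(a)}$; (2) for all $U,V\subseteq\mathrm{Ul}(A)$, $$\Box_U(V)=\bigcap_{(Y,O)}\ \bigcup_{\substack{a\in F_Y,\ b\in I_O}}\Box_{\varphi(a)}(\varphi(b))=\bigcap_{(Y,O)}\ \bigcup_{a\in F_Y}[Q_a](O),$$ where $(Y,O)$ ranges over pairs with $Y\subseteq U$ closed and $O\supseteq V$ open in the Stone space of $A$, $F_Y=\{a\in A: Y\subseteq\varphi(a)\}$ and $I_O=\{b\in A:\varphi(b)\subseteq O\}$.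
   Context: A conditional algebra is a pair $\langle A,\to\rangle$ where $A$ is a Boolean algebra and $\to$ is a binary operation with, for all $a,b,c$: $a\to 1=1$; $(a\to b)\wedge(a\to c)=a\to(b\wedge c)$; $(a\vee b)\to c\le (a\to c)\wedge(b\to c)$. $\mathrm{Ul}(A)$ is the Stone space of ultrafilters, $\varphi(a)=\{u:a\in u\}$; filters include the improper filter $A$, and $\varphi(F)=\{u:F\subseteq u\}$. $D^{\to}_X(Y)=\{b:\exists a\in Y,\ a\to b\in X\}$. $T_A(u,Z,v)$ iff there is a filter $F$ with $Z=\varphi(F)$ and $D^{\to}_u(F)\subseteq v$; $T_A(u,Z)=\{v:T_A(u,Z,v)\}$; $U\to_{T_A}V=\{u:\forall Z\subseteq U,\ T_A(u,Z)\subseteq V\}$. For $a\in A$: $Q_a(u,v)$ iff $\{b\in A: a\to b\in u\}\subseteq v$; $Q_a(u)=\{v:Q_a(u,v)\}$; $[Q_a](X)=\{u:Q_a(u)\subseteq X\}$ for $X\subseteq\mathrm{Ul}(A)$. *)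

theory Defs
  imports Main
begin

definition cond_alg :: "('a::boolean_algebra \<Rightarrow> 'a \<Rightarrow> 'a) \<Rightarrow> bool" where
  "cond_alg imp \<longleftrightarrow>
     (\<forall>a. imp a top = top) \<and>
     (\<forall>a b c. inf (imp a b) (imp a c) = imp a (inf b c)) \<and>
     (\<forall>a b c. imp (sup a b) c \<le> inf (imp a c) (imp b c))"

text \<open>Filters (the improper filter UNIV included).\<close>
definition is_filter :: "'a::boolean_algebra set \<Rightarrow> bool" where
  "is_filter F \<longleftrightarrow> top \<in> F \<and> (\<forall>a\<in>F. \<forall>b\<in>F. inf a b \<in> F) \<and>
     (\<forall>a b. a \<in> F \<longrightarrow> a \<le> b \<longrightarrow> b \<in> F)"

definition ultrafilter :: "'a::boolean_algebra set \<Rightarrow> bool" where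
  "ultrafilter u \<longleftrightarrow> is_filter u \<and> bot \<notin> u \<and>
     (\<forall>G. is_filter G \<and> bot \<notin> G \<and> u \<subseteq> G \<longrightarrow> G = u)"

definition Ul :: "'a::boolean_algebra set set" where
  "Ul = {u. ultrafilter u}"

definition phi :: "'a::boolean_algebra \<Rightarrow> 'a set set" where
  "phi a = {u \<in> Ul. a \<in> u}"

definition phiF :: "'a::boolean_algebra set \<Rightarrow> 'a set set" where
  "phiF F = {u \<in> Ul. F \<subseteq> u}"

definition stone_open :: "'a::boolean_algebra set set \<Rightarrow> bool" where
  "stone_open W \<longleftrightarrow> W \<subseteq> Ul \<and> (\<forall>u\<in>W. \<exists>b. u \<in> phi b \<and> phi b \<subseteq> W)"

definition stone_closed :: "'a::boolean_algebra set set \<Rightarrow> bool" where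
  "stone_closed Y \<longleftrightarrow> Y \<subseteq> Ul \<and> stone_open (Ul - Y)"

definition Dimp :: "('a::boolean_algebra \<Rightarrow> 'a \<Rightarrow> 'a) \<Rightarrow> 'a set \<Rightarrow> 'a set \<Rightarrow> 'a set" where
  "Dimp imp X Y = {b. \<exists>a\<in>Y. imp a b \<in> X}"

definition TA :: "('a::boolean_algebra \<Rightarrow> 'a \<Rightarrow> 'a) \<Rightarrow> 'a set \<Rightarrow> 'a set set \<Rightarrow> 'a set \<Rightarrow> bool" where
  "TA imp u Z v \<longleftrightarrow> (\<exists>F. is_filter F \<and> Z = phiF F \<and> Dimp imp u F \<subseteq> v)"

definition TAset :: "('a::boolean_algebra \<Rightarrow> 'a \<Rightarrow> 'a) \<Rightarrow> 'a set \<Rightarrow> 'a set set \<Rightarrow> 'a set set" where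
  "TAset imp u Z = {v \<in> Ul. TA imp u Z v}"

definition arrT :: "('a::boolean_algebra \<Rightarrow> 'a \<Rightarrow> 'a) \<Rightarrow> 'a set set \<Rightarrow> 'a set set \<Rightarrow> 'a set set" where
  "arrT imp U V = {u \<in> Ul. \<forall>Z. Z \<subseteq> U \<longrightarrow> TAset imp u Z \<subseteq> V}"

definition Box :: "('a::boolean_algebra \<Rightarrow> 'a \<Rightarrow> 'a) \<Rightarrow> 'a set set \<Rightarrow> 'a set set \<Rightarrow> 'a set set" where
  "Box imp U V = arrT imp U V"

definition Qrel :: "('a::boolean_algebra \<Rightarrow> 'a \<Rightarrow> 'a) \<Rightarrow> 'a \<Rightarrow> 'a set \<Rightarrow> 'a set \<Rightarrow> bool" where
  "Qrel imp a u v \<longleftrightarrow> {b. imp a b \<in> u} \<subseteq> v"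

definition Qset :: "('a::boolean_algebra \<Rightarrow> 'a \<Rightarrow> 'a) \<Rightarrow> 'a \<Rightarrow> 'a set \<Rightarrow> 'a set set" where
  "Qset imp a u = {v \<in> Ul. Qrel imp a u v}"

definition boxQ :: "('a::boolean_algebra \<Rightarrow> 'a \<Rightarrow> 'a) \<Rightarrow> 'a \<Rightarrow> 'a set set \<Rightarrow> 'a set set" where
  "boxQ imp a X = {u \<in> Ul. Qset imp a u \<subseteq> X}"

definition FY :: "'a::boolean_algebra set set \<Rightarrow> 'a set" where
  "FY Y = {a. Y \<subseteq> phi a}"

definition IO :: "'a::boolean_algebra set set \<Rightarrow> 'a set" where
  "IO W = {b. phi b \<subseteq> W}"

definition pairs :: "'a::boolean_algebra set set \<Rightarrow> 'a set set \<Rightarrow> ('a set set \<times> 'a set set) set" where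
  "pairs U V = {(Y, W). stone_closed Y \<and> Y \<subseteq> U \<and> stone_open W \<and> V \<subseteq> W}"

end

theory Submission
  imports Defs
begin

lemma filter_top: "is_filter F \<Longrightarrow> top \<in> F"
  by (simp add: is_filter_def)
lemma filter_inf: "is_filter F \<Longrightarrow> a \<in> F \<Longrightarrow> b \<in> F \<Longrightarrow> inf a b \<in> F"
  by (simp add: is_filter_def)
lemma filter_up: "is_filter F \<Longrightarrow> a \<in> F \<Longrightarrow> a \<le> b \<Longrightarrow> b \<in> F"
  unfolding is_filter_def by blast

lemma is_filterI:
  assumes "top \<in> F" "\<And>a b. a \<in> F \<Longrightarrow> b \<in> F \<Longrightarrow> inf a b \<in> F"
    "\<And>a b. a \<in> F \<Longrightarrow> a \<le> b \<Longrightarrow> b \<in> F"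
  shows "is_filter F"
  using assms unfolding is_filter_def by blast

definition fjoin :: "'a::boolean_algebra set \<Rightarrow> 'a set \<Rightarrow> 'a set" where
  "fjoin F G = {c. \<exists>f\<in>F. \<exists>g\<in>G. inf f g \<le> c}"

lemma fjoin_filter:
  assumes "is_filter F" "is_filter G" shows "is_filter (fjoin F G)"
proof -
  have "top \<in> fjoin F G" using assms filter_top unfolding fjoin_def by fastforce
  moreover have "inf a b \<in> fjoin F G" if "a \<in> fjoin F G" "b \<in> fjoin F G" for a b
  proof -
    note h = that
    obtain f1 g1 where 1: "f1 \<in> F" "g1 \<in> G" "inf f1 g1 \<le> a" using h(1) unfolding fjoin_def by blast
    obtain f2 g2 where 2: "f2 \<in> F" "g2 \<in> G" "inf f2 g2 \<le> b" using h(2) unfolding fjoin_def by blast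
    have "inf (inf f1 f2) (inf g1 g2) \<le> inf a b" using 1 2
      by (meson inf_le1 inf_le2 le_inf_iff order_trans)
    moreover have "inf f1 f2 \<in> F" "inf g1 g2 \<in> G" using 1 2 assms filter_inf by blast+
    ultimately show ?thesis unfolding fjoin_def by blast
  qed
  moreover have "b \<in> fjoin F G" if "a \<in> fjoin F G" "a \<le> b" for a b
    using that unfolding fjoin_def by (blast intro: order_trans)
  ultimately show ?thesis by (rule is_filterI)
qed

lemma fjoin_left: "is_filter G \<Longrightarrow> F \<subseteq> fjoin F G"
proof
  fix x assume "is_filter G" "x \<in> F"
  moreover have "inf x top \<le> x" by simp
  ultimately show "x \<in> fjoin F G" unfolding fjoin_def using filter_top by blast
qed
lemma fjoin_right: "is_filter F \<Longrightarrow> G \<subseteq> fjoin F G"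
proof
  fix x assume "is_filter F" "x \<in> G"
  moreover have "inf top x \<le> x" by simp
  ultimately show "x \<in> fjoin F G" unfolding fjoin_def using filter_top by blast
qed
lemma fjoin_proper: "\<forall>f\<in>F. \<forall>g\<in>G. inf f g \<noteq> bot \<Longrightarrow> bot \<notin> fjoin F G"
  unfolding fjoin_def using bot_unique by blast

lemma ultra_exists:
  assumes F: "is_filter F" and b: "bot \<notin> F"
  shows "\<exists>u. ultrafilter u \<and> F \<subseteq> u"
proof -
  let ?A = "{G. is_filter G \<and> bot \<notin> G \<and> F \<subseteq> G}"
  have "\<forall>C\<in>chains ?A. \<exists>U\<in>?A. \<forall>X\<in>C. X \<subseteq> U"
  proof
    fix C assume C: "C \<in> chains ?A"
    hence sub: "C \<subseteq> ?A" and ch: "\<forall>X\<in>C. \<forall>Y\<in>C. X \<subseteq> Y \<or> Y \<subseteq> X"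
      unfolding chains_def chain_subset_def by auto
    show "\<exists>U\<in>?A. \<forall>X\<in>C. X \<subseteq> U"
    proof (cases "C = {}")
      case True then show ?thesis using F b by blast
    next
      case False
      then obtain X0 where X0: "X0 \<in> C" by blast
      have "is_filter (\<Union>C)"
      proof -
        have "top \<in> \<Union>C" using X0 sub filter_top by blast
        moreover have "inf a c \<in> \<Union>C" if "a \<in> \<Union>C" "c \<in> \<Union>C" for a c
        proof -
          note h = that
          obtain X Y where XY: "X \<in> C" "Y \<in> C" "a \<in> X" "c \<in> Y" using h by blast
          have fX: "is_filter X" "is_filter Y" using XY sub by blast+
          from ch XY have "X \<subseteq> Y \<or> Y \<subseteq> X" by blast
          thus ?thesis
          proof
            assume "X \<subseteq> Y" thus ?thesis using XY fX filter_inf[of Y a c] by blast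
          next
            assume "Y \<subseteq> X" thus ?thesis using XY fX filter_inf[of X a c] by blast
          qed
        qed
        moreover have "c \<in> \<Union>C" if "a \<in> \<Union>C" "a \<le> c" for a c
          using that sub filter_up by blast
        ultimately show ?thesis by (rule is_filterI)
      qed
      moreover have "bot \<notin> \<Union>C" using sub by blast
      moreover have "F \<subseteq> \<Union>C" using X0 sub by blast
      ultimately show ?thesis by blast
    qed
  qed
  from Zorn_Lemma2[OF this] obtain M where M: "M \<in> ?A" "\<forall>X\<in>?A. M \<subseteq> X \<longrightarrow> X = M" by blast
  have "ultrafilter M" unfolding ultrafilter_def using M by blast
  thus ?thesis using M by blast
qed

lemma ultra_filter: "ultrafilter u \<Longrightarrow> is_filter u"
  and ultra_bot: "ultrafilter u \<Longrightarrow> bot \<notin> u"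
  by (simp_all add: ultrafilter_def)

lemma upset_filter: "is_filter {c. (a::'a::boolean_algebra) \<le> c}"
  unfolding is_filter_def by auto

lemma ultra_prime:
  assumes u: "ultrafilter u" and a: "a \<notin> u" shows "- a \<in> u"
proof (cases "\<forall>f\<in>u. \<forall>g\<in>{c. a \<le> c}. inf f g \<noteq> bot")
  case True
  let ?H = "fjoin u {c. a \<le> c}"
  have "is_filter ?H" using fjoin_filter ultra_filter[OF u] upset_filter by blast
  moreover have "bot \<notin> ?H" using fjoin_proper True by blast
  moreover have "u \<subseteq> ?H" using fjoin_left upset_filter by blast
  ultimately have "?H = u" using u unfolding ultrafilter_def by blast
  moreover have "a \<in> ?H" using fjoin_right ultra_filter[OF u] by blast
  ultimately show ?thesis using a by blast
next
  case False
  then obtain f g where "f \<in> u" "a \<le> g" "inf f g = bot" by blast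
  hence "inf f a \<le> bot" using inf_mono[OF order_refl \<open>a \<le> g\<close>, of f] by simp
  hence "inf f a = bot" using bot_unique by blast
  hence "f \<le> - a" by (simp add: inf_shunt)
  thus ?thesis using \<open>f \<in> u\<close> u ultra_filter filter_up by blast
qed

lemma ultra_not_both: "ultrafilter u \<Longrightarrow> a \<in> u \<Longrightarrow> - a \<in> u \<Longrightarrow> False"
  by (metis filter_inf inf_compl_bot ultra_bot ultra_filter)

lemma ultra_compl: "ultrafilter u \<Longrightarrow> (- a \<in> u) \<longleftrightarrow> (a \<notin> u)"
  using ultra_not_both ultra_prime by blast

lemma sep:
  assumes F: "is_filter F" and a: "a \<notin> F"
  shows "\<exists>u. ultrafilter u \<and> F \<subseteq> u \<and> a \<notin> u"
proof -
  let ?G = "{c. - a \<le> c}"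
  have "inf f g \<noteq> bot" if "f \<in> F" "g \<in> ?G" for f g
  proof
    assume "inf f g = bot"
    moreover have "- a \<le> g" using that by simp
    ultimately have "inf f (- a) \<le> bot" using inf_mono[OF order_refl, of "- a" g f] by simp
    hence "inf f (- a) = bot" using bot_unique by blast
    hence "f \<le> a" by (simp add: inf_shunt)
    thus False using a F that filter_up by blast
  qed
  hence "bot \<notin> fjoin F ?G" using fjoin_proper by blast
  moreover have "is_filter (fjoin F ?G)" using fjoin_filter F upset_filter by blast
  ultimately obtain u where u: "ultrafilter u" "fjoin F ?G \<subseteq> u" using ultra_exists by blast
  have "F \<subseteq> u" using u fjoin_left upset_filter by blast
  moreover have "- a \<in> u" using u fjoin_right[OF F, of ?G] by auto
  ultimately show ?thesis using u ultra_not_both by blast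
qed

lemma phiF_sub_phi: "is_filter F \<Longrightarrow> phiF F \<subseteq> phi a \<Longrightarrow> a \<in> F"
  using sep unfolding phiF_def phi_def Ul_def by blast

lemma disjoint_phiF:
  assumes "is_filter F" "is_filter G" "phiF F \<inter> phiF G = {}"
  shows "\<exists>f\<in>F. \<exists>g\<in>G. inf f g = bot"
proof (rule ccontr)
  assume "\<not> ?thesis"
  hence "bot \<notin> fjoin F G" using fjoin_proper by blast
  then obtain u where "ultrafilter u" "fjoin F G \<subseteq> u"
    using ultra_exists fjoin_filter assms by blast
  moreover have "F \<subseteq> fjoin F G" "G \<subseteq> fjoin F G" using assms fjoin_left fjoin_right by blast+
  ultimately have "u \<in> phiF F \<inter> phiF G" unfolding phiF_def Ul_def by auto
  thus False using assms by blast
qed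

lemma closed_rep:
  assumes Y: "stone_closed Y"
  shows "is_filter (FY Y)" "phiF (FY Y) = Y"
proof -
  have YU: "Y \<subseteq> Ul" using Y stone_closed_def by blast
  show "is_filter (FY Y)"
  proof -
    have "top \<in> FY Y" using YU unfolding FY_def phi_def Ul_def
      using filter_top ultra_filter by blast
    moreover have "inf a b \<in> FY Y" if "a \<in> FY Y" "b \<in> FY Y" for a b
      using that unfolding FY_def phi_def Ul_def using filter_inf ultra_filter by blast
    moreover have "b \<in> FY Y" if "a \<in> FY Y" "a \<le> b" for a b
      using that unfolding FY_def phi_def Ul_def using filter_up ultra_filter by blast
    ultimately show ?thesis by (rule is_filterI)
  qed
  show "phiF (FY Y) = Y"
  proof
    show "Y \<subseteq> phiF (FY Y)" using YU unfolding phiF_def FY_def phi_def by blast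
    show "phiF (FY Y) \<subseteq> Y"
    proof
      fix v assume v: "v \<in> phiF (FY Y)"
      hence vU: "v \<in> Ul" and vF: "FY Y \<subseteq> v" unfolding phiF_def by auto
      show "v \<in> Y"
      proof (rule ccontr)
        assume "v \<notin> Y"
        then obtain c where c: "v \<in> phi c" "phi c \<subseteq> Ul - Y"
          using Y vU unfolding stone_closed_def stone_open_def by blast
        have "Y \<subseteq> phi (- c)"
        proof
          fix w assume "w \<in> Y"
          hence "w \<in> Ul" "c \<notin> w" using c YU unfolding phi_def by auto
          thus "w \<in> phi (- c)" unfolding phi_def Ul_def using ultra_compl by auto
        qed
        hence "- c \<in> v" using vF unfolding FY_def by blast
        moreover have "c \<in> v" using c unfolding phi_def by auto
        ultimately show False using vU ultra_not_both unfolding Ul_def by blast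
      qed
    qed
  qed
qed

lemma phiF_closed:
  assumes F: "is_filter F" shows "stone_closed (phiF F)"
  unfolding stone_closed_def stone_open_def
proof (intro conjI ballI)
  show "phiF F \<subseteq> Ul" "Ul - phiF F \<subseteq> Ul" unfolding phiF_def by auto
  fix w assume w: "w \<in> Ul - phiF F"
  then obtain f where f: "f \<in> F" "f \<notin> w" unfolding phiF_def by auto
  have wu: "ultrafilter w" using w Ul_def by auto
  have "w \<in> phi (- f)" using w f ultra_compl[OF wu] unfolding phi_def by auto
  moreover have "phi (- f) \<subseteq> Ul - phiF F"
    unfolding phi_def phiF_def Ul_def using f ultra_not_both by blast
  ultimately show "\<exists>b. w \<in> phi b \<and> phi b \<subseteq> Ul - phiF F" by blast
qed

lemma open_minus_point:
  assumes v: "v \<in> Ul" shows "stone_open (Ul - {v})"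
  unfolding stone_open_def
proof (intro conjI ballI)
  show "Ul - {v} \<subseteq> Ul" by auto
  fix w assume w: "w \<in> Ul - {v}"
  have "\<not> w \<subseteq> v"
  proof
    assume "w \<subseteq> v"
    moreover have "is_filter v" "bot \<notin> v" using v Ul_def ultra_filter ultra_bot by auto
    ultimately have "v = w" using w unfolding Ul_def ultrafilter_def by blast
    thus False using w by blast
  qed
  then obtain b where "b \<in> w" "b \<notin> v" by blast
  thus "\<exists>b. w \<in> phi b \<and> phi b \<subseteq> Ul - {v}" using w unfolding phi_def by blast
qed

lemma imp_mono2:
  assumes "cond_alg imp" "b \<le> c" shows "imp a b \<le> imp a c"
proof -
  have "inf (imp a b) (imp a c) = imp a (inf b c)" using assms(1) cond_alg_def by blast
  also have "\<dots> = imp a b" using assms(2) by (simp add: inf.absorb1)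
  finally show ?thesis by (metis inf.orderI inf_commute)
qed

lemma imp_anti1:
  assumes "cond_alg imp" "a \<le> a'" shows "imp a' c \<le> imp a c"
proof -
  have ax: "\<forall>a b c. imp (sup a b) c \<le> inf (imp a c) (imp b c)"
    using assms(1) unfolding cond_alg_def by (elim conjE)
  have e: "sup a a' = a'" by (rule sup_absorb2[OF assms(2)])
  have "imp (sup a a') c \<le> inf (imp a c) (imp a' c)" using ax by blast
  hence "imp a' c \<le> inf (imp a c) (imp a' c)" unfolding e .
  thus ?thesis by (rule le_infE)
qed

lemma imp_top: "cond_alg imp \<Longrightarrow> imp a top = top"
  unfolding cond_alg_def by (elim conjE) (rule spec)

lemma imp_inf: "cond_alg imp \<Longrightarrow> inf (imp a b) (imp a c) = imp a (inf b c)"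
  unfolding cond_alg_def by (elim conjE) (drule spec)+

lemma D_filter:
  assumes C: "cond_alg imp" and u: "is_filter u" and F: "is_filter F"
  shows "is_filter (Dimp imp u F)"
proof -
  have "top \<in> Dimp imp u F" unfolding Dimp_def using imp_top[OF C] filter_top[OF u] filter_top[OF F]
    by fastforce
  moreover have "inf b1 b2 \<in> Dimp imp u F" if "b1 \<in> Dimp imp u F" "b2 \<in> Dimp imp u F" for b1 b2
  proof -
    note h = that
    obtain a1 where a1: "a1 \<in> F" "imp a1 b1 \<in> u"
      using h(1) unfolding Dimp_def by blast
    obtain a2 where a2: "a2 \<in> F" "imp a2 b2 \<in> u"
      using h(2) unfolding Dimp_def by blast
    note a = a1 a2
    let ?a = "inf a1 a2"
    have aF: "?a \<in> F" using a F filter_inf by blast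
    have "imp a1 b1 \<le> imp ?a b1" by (rule imp_anti1[OF C]) simp
    hence i1: "imp ?a b1 \<in> u" using filter_up[OF u a1(2)] by blast
    have "imp a2 b2 \<le> imp ?a b2" by (rule imp_anti1[OF C]) simp
    hence i2: "imp ?a b2 \<in> u" using filter_up[OF u a2(2)] by blast
    have "imp ?a (inf b1 b2) \<in> u" using filter_inf[OF u i1 i2] imp_inf[OF C] by simp
    thus ?thesis unfolding Dimp_def using aF by blast
  qed
  moreover have "c \<in> Dimp imp u F" if "b \<in> Dimp imp u F" "b \<le> c" for b c
  proof -
    note h = that
    obtain a1 where a1: "a1 \<in> F" "imp a1 b \<in> u"
      using h(1) unfolding Dimp_def by blast
    have "imp a1 b \<le> imp a1 c" using imp_mono2[OF C h(2)] .
    hence "imp a1 c \<in> u" using filter_up[OF u a1(2)] by blast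
    thus ?thesis unfolding Dimp_def using a1 by blast
  qed
  ultimately show ?thesis by (rule is_filterI)
qed

lemma part1:
  assumes C: "cond_alg imp" shows "boxQ imp a X = Box imp (phi a) X"
proof
  show "boxQ imp a X \<subseteq> Box imp (phi a) X"
  proof
    fix u assume u: "u \<in> boxQ imp a X"
    have "TAset imp u Z \<subseteq> X" if "Z \<subseteq> phi a" for Z
    proof
      fix v assume "v \<in> TAset imp u Z"
      then obtain F where F: "v \<in> Ul" "is_filter F" "Z = phiF F" "Dimp imp u F \<subseteq> v"
        unfolding TAset_def TA_def by blast
      have "a \<in> F" using phiF_sub_phi F that by blast
      hence "{b. imp a b \<in> u} \<subseteq> v" using F unfolding Dimp_def by blast
      hence "v \<in> Qset imp a u" using F unfolding Qset_def Qrel_def by blast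
      thus "v \<in> X" using u unfolding boxQ_def by blast
    qed
    thus "u \<in> Box imp (phi a) X" using u unfolding Box_def arrT_def boxQ_def by blast
  qed
  show "Box imp (phi a) X \<subseteq> boxQ imp a X"
  proof
    fix u assume u: "u \<in> Box imp (phi a) X"
    have "v \<in> X" if v: "v \<in> Qset imp a u" for v
    proof -
      have vU: "v \<in> Ul" and vQ: "{b. imp a b \<in> u} \<subseteq> v" using v unfolding Qset_def Qrel_def by auto
      have "phiF {c. a \<le> c} = phi a"
        unfolding phiF_def phi_def Ul_def using filter_up ultra_filter by fastforce
      moreover have "Dimp imp u {c. a \<le> c} \<subseteq> v"
      proof
        fix b assume "b \<in> Dimp imp u {c. a \<le> c}"
        then obtain c where "a \<le> c" "imp c b \<in> u" unfolding Dimp_def by blast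
        hence ac: "a \<le> c" and icb: "imp c b \<in> u" by auto
        have uf: "is_filter u" using u unfolding Box_def arrT_def Ul_def using ultra_filter by blast
        have "imp c b \<le> imp a b" using imp_anti1[OF C ac] .
        hence "imp a b \<in> u" using filter_up[OF uf icb] by blast
        thus "b \<in> v" using vQ by blast
      qed
      ultimately have "v \<in> TAset imp u (phi a)" unfolding TAset_def TA_def
        using vU upset_filter by blast
      thus ?thesis using u unfolding Box_def arrT_def by blast
    qed
    thus "u \<in> boxQ imp a X" using u unfolding boxQ_def Box_def arrT_def by blast
  qed
qed

lemma ultra_top: "u \<in> Ul \<Longrightarrow> top \<in> u"
  unfolding Ul_def using ultra_filter filter_top by blast

lemma pairs_nonempty: "V \<subseteq> Ul \<Longrightarrow> ({}, Ul) \<in> pairs U V"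
proof -
  assume V: "V \<subseteq> Ul"
  have "\<forall>u\<in>Ul. \<exists>b. u \<in> phi b \<and> phi b \<subseteq> Ul"
  proof
    fix u assume "u \<in> Ul"
    hence "u \<in> phi top" unfolding phi_def using ultra_top by blast
    moreover have "phi top \<subseteq> Ul" unfolding phi_def by blast
    ultimately show "\<exists>b. u \<in> phi b \<and> phi b \<subseteq> Ul" by blast
  qed
  hence o: "stone_open Ul" unfolding stone_open_def by simp
  hence "stone_closed {}" unfolding stone_closed_def by simp
  thus ?thesis unfolding pairs_def using o V by blast
qed

lemma part2a:
  assumes C: "cond_alg imp" and V: "V \<subseteq> Ul" and u: "u \<in> Box imp U V"
    and p: "(Y, W) \<in> pairs U V"
  shows "\<exists>a\<in>FY Y. \<exists>b\<in>IO W. u \<in> Box imp (phi a) (phi b)"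
proof -
  have uU: "u \<in> Ul" and uB: "\<forall>Z. Z \<subseteq> U \<longrightarrow> TAset imp u Z \<subseteq> V"
    using u unfolding Box_def arrT_def by auto
  have uu: "ultrafilter u" using uU Ul_def by blast
  have Yc: "stone_closed Y" and YU: "Y \<subseteq> U" and Wo: "stone_open W" and VW: "V \<subseteq> W"
    using p unfolding pairs_def by auto
  let ?F = "FY Y"
  have Ff: "is_filter ?F" and FY: "phiF ?F = Y" using closed_rep[OF Yc] by auto
  let ?D = "Dimp imp u ?F"
  have Df: "is_filter ?D" using D_filter[OF C ultra_filter[OF uu] Ff] .
  have WU: "W \<subseteq> Ul" using Wo stone_open_def by blast
  have "Ul - (Ul - W) = W" using WU by blast
  hence Wc: "stone_closed (Ul - W)" unfolding stone_closed_def using Wo by simp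
  let ?G = "FY (Ul - W)"
  have Gf: "is_filter ?G" and GW: "phiF ?G = Ul - W" using closed_rep[OF Wc] by auto
  have "phiF ?D \<inter> phiF ?G = {}"
  proof (rule ccontr)
    assume "phiF ?D \<inter> phiF ?G \<noteq> {}"
    then obtain v where v1: "v \<in> phiF ?D" and v2: "v \<in> phiF ?G" by blast
    have "v \<in> Ul" "?D \<subseteq> v" using v1 unfolding phiF_def by auto
    hence "TA imp u Y v" unfolding TA_def using Ff FY by blast
    hence "v \<in> TAset imp u Y" unfolding TAset_def using \<open>v \<in> Ul\<close> by blast
    hence "v \<in> V" using uB YU by blast
    thus False using v2 GW VW by blast
  qed
  then obtain d g where d: "d \<in> ?D" and g: "g \<in> ?G" and dg: "inf d g = bot"
    using disjoint_phiF[OF Df Gf] by blast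
  obtain a where a: "a \<in> ?F" "imp a d \<in> u" using d unfolding Dimp_def by blast
  have "phi d \<subseteq> W"
  proof
    fix w assume w: "w \<in> phi d"
    hence wU: "w \<in> Ul" and dw: "d \<in> w" unfolding phi_def by auto
    show "w \<in> W"
    proof (rule ccontr)
      assume "w \<notin> W"
      hence "w \<in> phi g" using g wU unfolding FY_def by blast
      hence "g \<in> w" unfolding phi_def by blast
      hence "inf d g \<in> w" using dw wU filter_inf ultra_filter unfolding Ul_def by blast
      thus False using dg wU ultra_bot unfolding Ul_def by auto
    qed
  qed
  hence dI: "d \<in> IO W" unfolding IO_def by blast
  have "Qset imp a u \<subseteq> phi d"
  proof
    fix v assume "v \<in> Qset imp a u"
    hence "v \<in> Ul" "{b. imp a b \<in> u} \<subseteq> v" unfolding Qset_def Qrel_def by auto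
    thus "v \<in> phi d" using a(2) unfolding phi_def by blast
  qed
  hence "u \<in> boxQ imp a (phi d)" unfolding boxQ_def using uU by blast
  hence "u \<in> Box imp (phi a) (phi d)" using part1[OF C] by blast
  thus ?thesis using a(1) dI by blast
qed

lemma boxQ_mono: "X \<subseteq> X' \<Longrightarrow> boxQ imp a X \<subseteq> boxQ imp a X'"
  unfolding boxQ_def by blast

lemma part2b:
  assumes C: "cond_alg imp" and b: "b \<in> IO W" and u: "u \<in> Box imp (phi a) (phi b)"
  shows "u \<in> boxQ imp a W"
proof -
  have "u \<in> boxQ imp a (phi b)" using u part1[OF C] by blast
  moreover have "phi b \<subseteq> W" using b unfolding IO_def by blast
  ultimately show ?thesis using boxQ_mono by blast
qed

lemma part2c:
  assumes C: "cond_alg imp" and V: "V \<subseteq> Ul"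
    and H: "\<And>Y W. (Y, W) \<in> pairs U V \<Longrightarrow> \<exists>a\<in>FY Y. u \<in> boxQ imp a W"
  shows "u \<in> Box imp U V"
proof -
  obtain a0 where "u \<in> boxQ imp a0 Ul" using H[OF pairs_nonempty[OF V]] by blast
  hence uU: "u \<in> Ul" unfolding boxQ_def by blast
  have "TAset imp u Z \<subseteq> V" if ZU: "Z \<subseteq> U" for Z
  proof
    fix v assume "v \<in> TAset imp u Z"
    then obtain F where vU: "v \<in> Ul" and Ff: "is_filter F" and Z: "Z = phiF F"
      and Dv: "Dimp imp u F \<subseteq> v"
      unfolding TAset_def TA_def by blast
    show "v \<in> V"
    proof (rule ccontr)
      assume nv: "v \<notin> V"
      have "(phiF F, Ul - {v}) \<in> pairs U V"
        unfolding pairs_def using phiF_closed[OF Ff] ZU Z open_minus_point[OF vU] V nv by blast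
      then obtain a where a: "a \<in> FY (phiF F)" and ua: "u \<in> boxQ imp a (Ul - {v})"
        using H by blast
      have "a \<in> F" using phiF_sub_phi[OF Ff] a unfolding FY_def by blast
      hence "{b. imp a b \<in> u} \<subseteq> v" using Dv unfolding Dimp_def by blast
      hence "v \<in> Qset imp a u" unfolding Qset_def Qrel_def using vU by blast
      hence "v \<in> Ul - {v}" using ua unfolding boxQ_def by blast
      thus False by blast
    qed
  qed
  thus ?thesis unfolding Box_def arrT_def using uU by blast
qed

theorem theorem3p9:
  fixes imp :: "'a::boolean_algebra \<Rightarrow> 'a \<Rightarrow> 'a"
  assumes "cond_alg imp"
  shows "(\<forall>a X. X \<subseteq> Ul \<longrightarrow> boxQ imp a X = Box imp (phi a) X) \<and>
    (\<forall>U V. U \<subseteq> Ul \<and> V \<subseteq> Ul \<longrightarrow>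
           Box imp U V =
             (\<Inter>(Y, W)\<in>pairs U V. \<Union>a\<in>FY Y. \<Union>b\<in>IO W. Box imp (phi a) (phi b)) \<and>
           (\<Inter>(Y, W)\<in>pairs U V. \<Union>a\<in>FY Y. \<Union>b\<in>IO W. Box imp (phi a) (phi b)) =
             (\<Inter>(Y, W)\<in>pairs U V. \<Union>a\<in>FY Y. boxQ imp a W))"
proof (intro conjI allI impI)
  fix a X show "boxQ imp a X = Box imp (phi a) X" using part1[OF assms] .
next
  fix U V :: "'a set set" assume UV: "U \<subseteq> Ul \<and> V \<subseteq> Ul"
  hence V: "V \<subseteq> Ul" by blast
  let ?R1 = "\<Inter>(Y, W)\<in>pairs U V. \<Union>a\<in>FY Y. \<Union>b\<in>IO W. Box imp (phi a) (phi b)"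
  let ?R3 = "\<Inter>(Y, W)\<in>pairs U V. \<Union>a\<in>FY Y. boxQ imp a W"
  have s1: "Box imp U V \<subseteq> ?R1"
  proof
    fix u assume u: "u \<in> Box imp U V"
    show "u \<in> ?R1"
    proof (rule INT_I)
      fix p assume p: "p \<in> pairs U V"
      obtain Y W where pe: "p = (Y, W)" by (cases p)
      have "\<exists>a\<in>FY Y. \<exists>b\<in>IO W. u \<in> Box imp (phi a) (phi b)"
        using part2a[OF assms V u] p pe by blast
      thus "u \<in> (case p of (Y, W) \<Rightarrow> \<Union>a\<in>FY Y. \<Union>b\<in>IO W. Box imp (phi a) (phi b))"
        using pe by simp
    qed
  qed
  have s2: "?R1 \<subseteq> ?R3"
  proof
    fix u assume u: "u \<in> ?R1"
    show "u \<in> ?R3"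
    proof (rule INT_I)
      fix p assume p: "p \<in> pairs U V"
      obtain Y W where pe: "p = (Y, W)" by (cases p)
      have "u \<in> (case p of (Y, W) \<Rightarrow> \<Union>a\<in>FY Y. \<Union>b\<in>IO W. Box imp (phi a) (phi b))"
        using u p by (rule INT_D)
      hence "u \<in> (\<Union>a\<in>FY Y. \<Union>b\<in>IO W. Box imp (phi a) (phi b))"
        using pe by simp
      then obtain a b where "a \<in> FY Y" "b \<in> IO W" "u \<in> Box imp (phi a) (phi b)" by blast
      hence "u \<in> (\<Union>a\<in>FY Y. boxQ imp a W)" using part2b[OF assms] by blast
      thus "u \<in> (case p of (Y, W) \<Rightarrow> \<Union>a\<in>FY Y. boxQ imp a W)" using pe by simp
    qed
  qed
  have s3: "?R3 \<subseteq> Box imp U V"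
  proof
    fix u assume u: "u \<in> ?R3"
    have "\<exists>a\<in>FY Y. u \<in> boxQ imp a W" if "(Y, W) \<in> pairs U V" for Y W
    proof -
      have "u \<in> (case (Y, W) of (Y, W) \<Rightarrow> \<Union>a\<in>FY Y. boxQ imp a W)"
        using u that by (rule INT_D)
      thus ?thesis by simp
    qed
    thus "u \<in> Box imp U V" using part2c[OF assms V] by blast
  qed
  show "Box imp U V = ?R1" by (rule equalityI[OF s1 subset_trans[OF s2 s3]])
  show "?R1 = ?R3" by (rule equalityI[OF s2 subset_trans[OF s3 s1]])
qed

end
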